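(* For every $n\ge0$, the number $e_n$ of Dyck paths with catastrophes of length $n$ equals the number $h_n$ of $1$-horizontal Dyck paths of length $n$.
   Context: A Dyck path with catastrophes of length $n$ is a sequence of $n$ steps starting and ending at altitude $0$ and never going below altitude $0$, where each step is either an up step $(1,1)$, a down step $(1,-1)$, or a catastrophe, i.e. a step from an altitude $h>1$ directly to altitude $0$. A $1$-horizontal Dyck path of length $n$ is a sequence of $n$ steps starting and ending at altitude $0$ and never going below altitude $0$, where each step is an up step $(1,1)$, a down step $(1,-1)$, or a horizontal step $(1,0)$, horizontal steps being allowed only at altitude $1$. *)

theory Defs
  imports Main
begin

text \<open>Steps of lattice paths: up (1,1), down (1,-1), horizontal (1,0),
  and catastrophe (a jump from the current altitude directly to 0).\<close>
datatype step = U | D | H | C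

fun cat_valid :: "nat \<Rightarrow> step list \<Rightarrow> bool" where
  "cat_valid h [] = (h = 0)"
| "cat_valid h (U # s) = cat_valid (Suc h) s"
| "cat_valid h (D # s) = (h > 0 \<and> cat_valid (h - 1) s)"
| "cat_valid h (C # s) = (h > 1 \<and> cat_valid 0 s)"
| "cat_valid h (H # s) = False"

fun hor_valid :: "nat \<Rightarrow> step list \<Rightarrow> bool" where
  "hor_valid h [] = (h = 0)"
| "hor_valid h (U # s) = hor_valid (Suc h) s"
| "hor_valid h (D # s) = (h > 0 \<and> hor_valid (h - 1) s)"
| "hor_valid h (H # s) = (h = 1 \<and> hor_valid h s)"
| "hor_valid h (C # s) = False"

definition dyck_cat_paths :: "nat \<Rightarrow> step list set" where
  "dyck_cat_paths n = {s. length s = n \<and> cat_valid 0 s}"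

definition hor1_dyck_paths :: "nat \<Rightarrow> step list set" where
  "hor1_dyck_paths n = {s. length s = n \<and> hor_valid 0 s}"

definition e :: "nat \<Rightarrow> nat" where "e n = card (dyck_cat_paths n)"
definition h :: "nat \<Rightarrow> nat" where "h n = card (hor1_dyck_paths n)"

end

theory Submission
  imports Defs
begin

fun ff :: "nat \<Rightarrow> nat \<Rightarrow> step list \<Rightarrow> step list" where
  "ff a k [] = []"
| "ff a k (U # s) = U # ff (Suc a) k s"
| "ff a k (H # s) = U # ff a (Suc k) s"
| "ff a k (D # s) = (if a = 1 \<and> k > 0 then C # ff 0 0 s else D # ff (a - 1) k s)"
| "ff a k (C # s) = C # ff a k s"

fun cm :: "nat \<Rightarrow> step list \<Rightarrow> nat option" where
  "cm c [] = None"
| "cm c (C # s) = (if c = 0 then None else Some c)"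
| "cm c (U # s) = (if c = 0 then None else map_option (min c) (cm (Suc c) s))"
| "cm c (D # s) = (if c = 0 then None else map_option (min c) (cm (c - 1) s))"
| "cm c (H # s) = None"

definition phi :: "nat \<Rightarrow> step list \<Rightarrow> nat" where
  "phi c s = (case cm c s of None \<Rightarrow> c | Some m \<Rightarrow> Suc c - m)"

fun gg :: "nat \<Rightarrow> step list \<Rightarrow> step list" where
  "gg c [] = []"
| "gg c (U # s) = (if 0 < c \<and> cm (Suc c) s = Some (Suc c) then H else U) # gg (Suc c) s"
| "gg c (D # s) = D # gg (c - 1) s"
| "gg c (C # s) = D # gg 0 s"
| "gg c (H # s) = H # gg c s"

lemma cm_bounds: "cm c s = Some m \<Longrightarrow> 1 \<le> m \<and> m \<le> c"
  by (induction c s arbitrary: m rule: cm.induct) (auto split: if_splits)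

lemma len_ff: "length (ff a k t) = length t"
  by (induction a k t rule: ff.induct) auto

lemma len_gg: "length (gg c t) = length t"
  by (induction c t rule: gg.induct) auto

lemma cm0[simp]: "cm 0 s = None"
  by (cases "(0::nat, s)" rule: cm.cases) auto

lemma ff_valid: "hor_valid a t \<Longrightarrow> (k > 0 \<longrightarrow> a \<ge> 1) \<Longrightarrow> cat_valid (a + k) (ff a k t)"
proof (induction a k t rule: ff.induct)
  case (4 a k s)
  show ?case
  proof (cases "a = 1 \<and> k > 0")
    case True then show ?thesis using 4 by auto
  next
    case False
    with 4 have "hor_valid (a - 1) s" "k > 0 \<longrightarrow> a - 1 \<ge> 1" "a \<ge> 1" by auto
    with 4(2)[OF False] have "cat_valid (a - 1 + k) (ff (a - 1) k s)" by blast
    moreover have "a + k - 1 = a - 1 + k" using \<open>a \<ge> 1\<close> by simp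
    ultimately show ?thesis using False \<open>a \<ge> 1\<close> by auto
  qed
qed auto

lemma cm_ff: "hor_valid a t \<Longrightarrow> a \<ge> 1 \<Longrightarrow>
   (cm (a + k) (ff a k t) = None \<and> k = 0) \<or> cm (a + k) (ff a k t) = Some (Suc k)"
proof (induction a k t rule: ff.induct)
  case (4 a k s)
  show ?case
  proof (cases "a = 1 \<and> k > 0")
    case True then show ?thesis by simp
  next
    case False
    show ?thesis
    proof (cases "a = 1")
      case True
      with False 4 show ?thesis by simp
    next
      case False
      with 4 have "hor_valid (a - 1) s" "a - 1 \<ge> 1" by auto
      with 4(2)[OF \<open>\<not> (a = 1 \<and> k > 0)\<close>] have
        "(cm (a - 1 + k) (ff (a - 1) k s) = None \<and> k = 0) \<or> cm (a - 1 + k) (ff (a - 1) k s) = Some (Suc k)"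
        by blast
      moreover have "a + k - 1 = a - 1 + k" using \<open>a - 1 \<ge> 1\<close> by simp
      ultimately show ?thesis using \<open>\<not> (a = 1 \<and> k > 0)\<close> \<open>a - 1 \<ge> 1\<close> by auto
    qed
  qed
qed auto

lemma gg_ff: "hor_valid a t \<Longrightarrow> (k > 0 \<longrightarrow> a \<ge> 1) \<Longrightarrow> gg (a + k) (ff a k t) = t"
proof (induction a k t rule: ff.induct)
  case (2 a k s)
  show ?case
  proof (cases "a = 0")
    case True then show ?thesis using 2 by auto
  next
    case False
    with 2 have "hor_valid (Suc a) s" by auto
    from cm_ff[OF this, of k] have "cm (Suc (a + k)) (ff (Suc a) k s) \<noteq> Some (Suc (a + k))"
      using False by auto
    then show ?thesis using 2 by auto
  qed
next
  case (3 a k s)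
  then have hv: "hor_valid 1 s" "a = 1" by auto
  from cm_ff[OF hv(1), of "Suc k"] have "cm (Suc (Suc k)) (ff 1 (Suc k) s) = Some (Suc (Suc k))"
    by auto
  then show ?case using 3 hv by auto
next
  case (4 a k s)
  show ?case
  proof (cases "a = 1 \<and> k > 0")
    case True then show ?thesis using 4 by auto
  next
    case False
    with 4 have "hor_valid (a - 1) s" "k > 0 \<longrightarrow> a - 1 \<ge> 1" "a \<ge> 1" by auto
    with 4(2)[OF False] have "gg (a - 1 + k) (ff (a - 1) k s) = s" by blast
    moreover have "a + k - 1 = a - 1 + k" using \<open>a \<ge> 1\<close> by simp
    ultimately show ?thesis using False by auto
  qed
qed auto

lemma cat_main: "cat_valid c s \<Longrightarrow> hor_valid (phi c s) (gg c s) \<and> ff (phi c s) (c - phi c s) (gg c s) = s"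
proof (induction c s rule: gg.induct)
  case (1 c)
  then show ?case by (simp add: phi_def)
next
  case (2 c s)
  then have v: "cat_valid (Suc c) s" by simp
  note IH = 2(1)[OF v]
  show ?case
  proof (cases "c = 0")
    case True
    then show ?thesis using IH cm_bounds[of 1 s]
      by (auto simp: phi_def split: option.splits)
  next
    case False
    show ?thesis
    proof (cases "cm (Suc c) s")
      case None
      then show ?thesis using IH False by (auto simp: phi_def)
    next
      case (Some m)
      with cm_bounds have b: "1 \<le> m" "m \<le> Suc c" by auto
      show ?thesis
      proof (cases "m = Suc c")
        case True
        then show ?thesis using IH False Some by (auto simp: phi_def min_def)
      next
        case False2: False
        then have "min c m = m" using b by simp
        then show ?thesis using IH False Some False2 b by (auto simp: phi_def Suc_diff_le)
      qed
    qed
  qed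
next
  case (3 c s)
  then have v: "cat_valid (c - 1) s" and c: "c > 0" by auto
  note IH = 3(1)[OF v]
  show ?case
  proof (cases "cm (c - 1) s")
    case None
    then show ?thesis using IH c by (auto simp: phi_def)
  next
    case (Some m)
    with cm_bounds have b: "1 \<le> m" "m \<le> c - 1" by auto
    then show ?thesis using IH c Some by (auto simp: phi_def min_def)
  qed
next
  case (4 c s)
  then have v: "cat_valid 0 s" and c: "c > 1" by auto
  note IH = 4(1)[OF v]
  have "phi 0 s = 0" by (simp add: phi_def)
  then show ?case using IH c by (auto simp: phi_def)
next
  case (5 c s)
  then show ?case by simp
qed

theorem theorem3p1:
  fixes n :: nat
  shows "e n = h n"
proof -
  have "bij_betw (gg 0) (dyck_cat_paths n) (hor1_dyck_paths n)"
  proof (rule bij_betw_byWitness[where f' = "ff 0 0"])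
    show "\<forall>x\<in>dyck_cat_paths n. ff 0 0 (gg 0 x) = x"
    proof
      fix a assume "a \<in> dyck_cat_paths n"
      then have v: "cat_valid 0 a" by (simp add: dyck_cat_paths_def)
      have "phi 0 a = 0" by (simp add: phi_def)
      then show "ff 0 0 (gg 0 a) = a" using cat_main[OF v] by simp
    qed
    show "\<forall>a'\<in>hor1_dyck_paths n. gg 0 (ff 0 0 a') = a'"
      using gg_ff[where a=0 and k=0] by (simp add: hor1_dyck_paths_def)
    show "gg 0 ` dyck_cat_paths n \<subseteq> hor1_dyck_paths n"
    proof
      fix b assume "b \<in> gg 0 ` dyck_cat_paths n"
      then obtain a where a: "a \<in> dyck_cat_paths n" "b = gg 0 a" by auto
      then have v: "cat_valid 0 a" by (simp add: dyck_cat_paths_def)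
      have "phi 0 a = 0" by (simp add: phi_def)
      then show "b \<in> hor1_dyck_paths n" using cat_main[OF v] a len_gg
        by (simp add: dyck_cat_paths_def hor1_dyck_paths_def)
    qed
    show "ff 0 0 ` hor1_dyck_paths n \<subseteq> dyck_cat_paths n"
      using ff_valid[where a=0 and k=0] len_ff by (auto simp: hor1_dyck_paths_def dyck_cat_paths_def)
  qed
  then show ?thesis unfolding e_def h_def by (rule bij_betw_same_card)
qed

end
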